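(* Let $0<c<1$ and let $(v^*,u^* )$ be the unique saddle point of $\min_v\max_u E(v,u)$. Define, for $v\in\mathbb{R}^{|S|}$, $u\in\mathbb{R}^{|S|\times|A|}_{>0}$, $$L_c(v,u)=\frac{\alpha}{2}\sum_s|v_s-v^*_s|^2+\tau\Big(\sum_{s,a}\Big(u^*_{sa}\log\frac{u^*_{sa}}{u_{sa}}+u_{sa}-u^*_{sa}\Big)+\frac{c}{1-c}\sum_s\Big(\tilde u^*_s\log\frac{\tilde u^*_s}{\tilde u_s}+\tilde u_s-\tilde u^*_s\Big)\Big).$$ Then $L_c$ is convex, its unique minimum is attained at $(v^*,u^* )$ with $L_c(v^*,u^* )=0$, and the sublevel sets of $L_c$ are bounded.
   Context: Finite MDP: state space $S$, action space $A$, transition probabilities $P_{ass'}$ (with $\sum_{s'}P_{ass'}=1$), rewards $r_{sa}\ge0$, discount $\gamma\in(0,1)$, regularization $\tau>0$, and $\alpha>0$. $K_{ass'}=\delta_{ss'}-\gamma P_{ass'}$, $\tilde u_s=\sum_a u_{sa}$ (and $\tilde u^*_s=\sum_a u^*_{sa}$), and $E(v,u)=\frac{\alpha}{2}\sum_s v_s^2+\sum_{s,a}u_{sa}(r_{sa}-\sum_{s'}K_{ass'}v_{s'})-\tau\sum_{s,a}u_{sa}\log(u_{sa}/\tilde u_s)$. This min-max problem has a unique saddle point $(v^*,u^* )$ with $u^*_{sa}>0$. *)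

theory Defs
  imports "HOL-Analysis.Analysis"
begin

text \<open>Value functions v :: real^'s, occupancy variables u :: real^'a^'s (u $ s $ a = u_{sa}).
  Transition probabilities P a s s' = P_{ass'}, rewards r s a = r_{sa}.\<close>

definition Kmat :: "real \<Rightarrow> ('a \<Rightarrow> 's \<Rightarrow> 's \<Rightarrow> real) \<Rightarrow> 'a \<Rightarrow> 's \<Rightarrow> 's \<Rightarrow> real" where
  "Kmat \<gamma> P a s s' = (if s = s' then 1 else 0) - \<gamma> * P a s s'"

definition utilde :: "real^'a^'s \<Rightarrow> 's \<Rightarrow> real" where
  "utilde u s = (\<Sum>a\<in>UNIV. u $ s $ a)"

definition Efun :: "real \<Rightarrow> real \<Rightarrow> real \<Rightarrow> ('a::finite \<Rightarrow> 's::finite \<Rightarrow> 's \<Rightarrow> real)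
    \<Rightarrow> ('s \<Rightarrow> 'a \<Rightarrow> real) \<Rightarrow> real^'s \<Rightarrow> real^'a^'s \<Rightarrow> real" where
  "Efun \<alpha> \<gamma> \<tau> P r v u =
     \<alpha> / 2 * (\<Sum>s\<in>UNIV. (v $ s)^2)
     + (\<Sum>s\<in>UNIV. \<Sum>a\<in>UNIV. u $ s $ a * (r s a - (\<Sum>s'\<in>UNIV. Kmat \<gamma> P a s s' * v $ s')))
     - \<tau> * (\<Sum>s\<in>UNIV. \<Sum>a\<in>UNIV. u $ s $ a * ln (u $ s $ a / utilde u s))"

definition is_saddle :: "real \<Rightarrow> real \<Rightarrow> real \<Rightarrow> ('a::finite \<Rightarrow> 's::finite \<Rightarrow> 's \<Rightarrow> real)
    \<Rightarrow> ('s \<Rightarrow> 'a \<Rightarrow> real) \<Rightarrow> real^'s \<Rightarrow> real^'a^'s \<Rightarrow> bool" where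
  "is_saddle \<alpha> \<gamma> \<tau> P r vs us \<longleftrightarrow>
     (\<forall>s a. us $ s $ a \<ge> 0) \<and>
     (\<forall>u. (\<forall>s a. u $ s $ a \<ge> 0) \<longrightarrow> Efun \<alpha> \<gamma> \<tau> P r vs u \<le> Efun \<alpha> \<gamma> \<tau> P r vs us) \<and>
     (\<forall>v. Efun \<alpha> \<gamma> \<tau> P r vs us \<le> Efun \<alpha> \<gamma> \<tau> P r v us)"

definition Lc :: "real \<Rightarrow> real \<Rightarrow> real \<Rightarrow> (real^'s::finite) \<Rightarrow> (real^'a::finite^'s)
    \<Rightarrow> (real^'s) \<times> (real^'a^'s) \<Rightarrow> real" where
  "Lc c \<alpha> \<tau> vs us = (\<lambda>(v, u).
     \<alpha> / 2 * (\<Sum>s\<in>UNIV. \<bar>v $ s - vs $ s\<bar>^2)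
     + \<tau> * ((\<Sum>s\<in>UNIV. \<Sum>a\<in>UNIV.
                 us $ s $ a * ln (us $ s $ a / u $ s $ a) + u $ s $ a - us $ s $ a)
            + c / (1 - c) * (\<Sum>s\<in>UNIV.
                 utilde us s * ln (utilde us s / utilde u s) + utilde u s - utilde us s)))"

definition posdom :: "((real^'s::finite) \<times> (real^'a::finite^'s)) set" where
  "posdom = {(v, u). \<forall>s a. u $ s $ a > 0}"

end

theory Submission
  imports Defs
begin


definition kl :: "real \<Rightarrow> real \<Rightarrow> real" where
  "kl a y = a * ln (a / y) + y - a"

lemma kl_nonneg: assumes "a > 0" "y > 0" shows "kl a y \<ge> 0"
proof -
  have "ln (y/a) \<le> y/a - 1" using assms by (intro ln_le_minus_one) simp
  hence "a * ln (y/a) \<le> y - a" using assms by (simp add: field_simps)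
  moreover have "ln (a/y) = - ln (y/a)" using assms by (simp add: ln_div)
  ultimately show ?thesis unfolding kl_def by simp
qed

lemma ln_strict: assumes "(z::real) > 0" "z \<noteq> 1" shows "ln z < z - 1"
proof -
  have sq: "sqrt z > 0" using assms by simp
  have f1: "ln (sqrt z) \<le> sqrt z - 1" using sq by (rule ln_le_minus_one)
  have f2: "ln z = 2 * ln (sqrt z)"
    using assms by (simp add: ln_sqrt)
  have "sqrt z \<noteq> 1" using assms by simp
  hence "(sqrt z - 1)^2 > 0" by simp
  moreover have "(sqrt z - 1)^2 = z - 2 * sqrt z + 1" using assms by (simp add: power2_eq_square algebra_simps)
  ultimately have f3: "2 * (sqrt z - 1) < z - 1" by (simp add: algebra_simps)
  show ?thesis using f1 f2 f3 by (smt (verit))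
qed

lemma kl_pos: assumes "a > 0" "y > 0" "y \<noteq> a" shows "kl a y > 0"
proof -
  have "ln (y/a) < y/a - 1" using assms by (intro ln_strict) auto
  hence "a * ln (y/a) < y - a" using assms by (simp add: field_simps)
  moreover have "ln (a/y) = - ln (y/a)" using assms by (simp add: ln_div)
  ultimately show ?thesis unfolding kl_def by simp
qed

lemma kl_zero: "a > 0 \<Longrightarrow> kl a a = 0" by (simp add: kl_def)

lemma kl_lower: assumes "a > 0" "y > 0" shows "y/2 - a * ln 2 \<le> kl a y"
proof -
  have "ln (y/(2*a)) \<le> y/(2*a) - 1" using assms by (intro ln_le_minus_one) simp
  hence "a * ln (y/(2*a)) \<le> y/2 - a" using assms by (simp add: field_simps)
  moreover have e1: "ln (y/(2*a)) = ln y - ln 2 - ln a" using assms by (simp add: ln_div ln_mult)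
  have "a * ln (y/(2*a)) = a * ln y - a * ln 2 - a * ln a" unfolding e1 by (simp add: algebra_simps)
  moreover have e2: "ln (a/y) = ln a - ln y" using assms by (simp add: ln_div)
  have "a * ln (a/y) = a * ln a - a * ln y" unfolding e2 by (simp add: algebra_simps)
  ultimately show ?thesis unfolding kl_def by linarith
qed

lemma kl_convex: assumes "a > 0" "p > 0" "q > 0" "0 \<le> t" "t \<le> 1"
  shows "kl a ((1-t)*p + t*q) \<le> (1-t) * kl a p + t * kl a q"
proof -
  have pos: "(1-t)*p + t*q > 0"
    using assms by (cases "t = 0") (auto intro: add_nonneg_pos add_pos_nonneg)
  have "ln ((1-t)*p + t*q) \<ge> (1-t) * ln p + t * ln q"
    using concave_onD[OF ln_concave, of t p q] assms by simp
  hence "a * ln ((1-t)*p + t*q) \<ge> a * ((1-t) * ln p + t * ln q)"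
    using assms by (intro mult_left_mono) auto
  moreover have e1: "ln (a/((1-t)*p + t*q)) = ln a - ln ((1-t)*p + t*q)" using assms pos by (simp add: ln_div)
  moreover have e2: "ln (a/p) = ln a - ln p" using assms by (simp add: ln_div)
  moreover have e3: "ln (a/q) = ln a - ln q" using assms by (simp add: ln_div)
  ultimately show ?thesis unfolding kl_def e1 e2 e3 by (simp add: algebra_simps)
qed

lemma sq_convex: assumes "0 \<le> t" "t \<le> 1"
  shows "((1-t)*x + t*y)^2 \<le> (1-t) * x^2 + t * (y::real)^2"
proof -
  have "(1-t) * x^2 + t * y^2 - ((1-t)*x + t*y)^2 = t*(1-t)*(x-y)^2"
    by (simp add: power2_eq_square algebra_simps)
  moreover have "t*(1-t)*(x-y)^2 \<ge> 0" using assms by simp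
  ultimately show ?thesis by linarith
qed

lemma Lc_eq: "Lc c \<alpha> \<tau> vs us (v,u) = \<alpha>/2 * (\<Sum>s\<in>UNIV. (v$s - vs$s)^2)
   + \<tau> * ((\<Sum>s\<in>UNIV. \<Sum>a\<in>UNIV. kl (us$s$a) (u$s$a)) + c/(1-c) * (\<Sum>s\<in>UNIV. kl (utilde us s) (utilde u s)))"
  by (simp add: Lc_def kl_def)

lemma utilde_pos: "\<forall>s a. u$s$a > 0 \<Longrightarrow> utilde u s > 0"
  unfolding utilde_def by (intro sum_pos) auto

lemma comb_pos: "(x::real) > 0 \<Longrightarrow> y > 0 \<Longrightarrow> u \<ge> 0 \<Longrightarrow> v \<ge> 0 \<Longrightarrow> u + v = 1 \<Longrightarrow> u*x + v * y > 0"
  by (cases "u = 0") (auto intro: add_pos_nonneg)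

lemma posdom_convex: "convex (posdom :: ((real^'s::finite) \<times> (real^'a::finite^'s)) set)"
  unfolding convex_def posdom_def
  by (auto intro!: comb_pos)

lemma utilde_comb: "utilde ((1-t) *\<^sub>R u1 + t *\<^sub>R u2) s = (1-t) * utilde u1 s + t * utilde u2 s"
  unfolding utilde_def by (simp add: sum.distrib sum_distrib_left)

lemma Lc_convex:
  fixes vs :: "real^'s::finite" and us :: "real^'a::finite^'s"
  assumes alpha: "\<alpha> > 0" and tau: "\<tau> > 0" and c: "0 < c" "c < 1" and us_pos: "\<forall>s a. us $ s $ a > 0"
  shows "convex_on posdom (Lc c \<alpha> \<tau> vs us)"
proof (rule convex_onI)
  show "convex posdom" by (rule posdom_convex)
next
  fix t :: real and x y :: "(real^'s) \<times> (real^'a^'s)"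
  assume t: "0 < t" "t < 1" and x: "x \<in> posdom" and y: "y \<in> posdom"
  obtain v1 u1 where xe: "x = (v1,u1)" by (cases x)
  obtain v2 u2 where ye: "y = (v2,u2)" by (cases y)
  have u1: "\<forall>s a. u1$s$a > 0" using x xe by (simp add: posdom_def)
  have u2: "\<forall>s a. u2$s$a > 0" using y ye by (simp add: posdom_def)
  define zv where "zv = (1-t) *\<^sub>R v1 + t *\<^sub>R v2"
  define zu where "zu = (1-t) *\<^sub>R u1 + t *\<^sub>R u2"
  have z: "(1-t) *\<^sub>R x + t *\<^sub>R y = (zv, zu)" by (simp add: xe ye zv_def zu_def)
  define k where "k = c/(1-c)"
  have k: "k \<ge> 0" using c by (simp add: k_def)
  define A where "A = (\<lambda>v::real^'s. \<Sum>s\<in>UNIV. (v$s - vs$s)^2)"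
  define B where "B = (\<lambda>u::real^'a^'s. \<Sum>s\<in>UNIV. \<Sum>a\<in>UNIV. kl (us$s$a) (u$s$a))"
  define C where "C = (\<lambda>u::real^'a^'s. \<Sum>s\<in>UNIV. kl (utilde us s) (utilde u s))"
  have L: "\<And>v u. Lc c \<alpha> \<tau> vs us (v,u) = \<alpha>/2 * A v + \<tau> * (B u + k * C u)"
    by (simp add: Lc_eq A_def B_def C_def k_def)
  have hA: "A zv \<le> (1-t) * A v1 + t * A v2"
  proof -
    have "A zv = (\<Sum>s\<in>UNIV. ((1-t) * (v1$s - vs$s) + t * (v2$s - vs$s))^2)"
      unfolding A_def zv_def by (intro sum.cong) (auto simp: algebra_simps)
    also have "\<dots> \<le> (\<Sum>s\<in>UNIV. (1-t) * (v1$s - vs$s)^2 + t * (v2$s - vs$s)^2)"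
      using t by (intro sum_mono sq_convex) auto
    also have "\<dots> = (1-t) * A v1 + t * A v2"
      unfolding A_def by (simp add: sum.distrib sum_distrib_left)
    finally show ?thesis .
  qed
  have hB: "B zu \<le> (1-t) * B u1 + t * B u2"
  proof -
    have "B zu \<le> (\<Sum>s\<in>UNIV. \<Sum>a\<in>UNIV. (1-t) * kl (us$s$a) (u1$s$a) + t * kl (us$s$a) (u2$s$a))"
      unfolding B_def zu_def using t u1 u2 us_pos by (auto intro!: sum_mono kl_convex)
    also have "\<dots> = (1-t) * B u1 + t * B u2"
      unfolding B_def by (simp add: sum.distrib sum_distrib_left)
    finally show ?thesis .
  qed
  have hC: "C zu \<le> (1-t) * C u1 + t * C u2"
  proof -
    have "C zu \<le> (\<Sum>s\<in>UNIV. (1-t) * kl (utilde us s) (utilde u1 s) + t * kl (utilde us s) (utilde u2 s))"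
      unfolding C_def zu_def utilde_comb using t u1 u2 us_pos
      by (auto intro!: sum_mono kl_convex utilde_pos)
    also have "\<dots> = (1-t) * C u1 + t * C u2"
      unfolding C_def by (simp add: sum.distrib sum_distrib_left)
    finally show ?thesis .
  qed
  have "\<alpha>/2 * A zv \<le> \<alpha>/2 * ((1-t) * A v1 + t * A v2)" using hA alpha by (intro mult_left_mono) auto
  moreover have "k * C zu \<le> k * ((1-t) * C u1 + t * C u2)" using hC k by (intro mult_left_mono) auto
  hence "\<tau> * (B zu + k * C zu) \<le> \<tau> * (((1-t) * B u1 + t * B u2) + k * ((1-t) * C u1 + t * C u2))"
    using hB tau by (intro mult_left_mono) auto
  ultimately have "Lc c \<alpha> \<tau> vs us (zv,zu) \<le> (1-t) * Lc c \<alpha> \<tau> vs us (v1,u1) + t * Lc c \<alpha> \<tau> vs us (v2,u2)"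
    unfolding L by (simp add: algebra_simps diff_divide_distrib)
  thus "Lc c \<alpha> \<tau> vs us ((1-t) *\<^sub>R x + t *\<^sub>R y) \<le> (1-t) * Lc c \<alpha> \<tau> vs us x + t * Lc c \<alpha> \<tau> vs us y"
    using z xe ye by simp
qed


lemma Lc_parts:
  fixes vs :: "real^'s::finite" and us :: "real^'a::finite^'s"
  assumes alpha: "\<alpha> > 0" and tau: "\<tau> > 0" and c: "0 < c" "c < 1" and us_pos: "\<forall>s a. us $ s $ a > 0"
    and p: "(v,u) \<in> posdom"
  shows "\<alpha>/2 * (\<Sum>s\<in>UNIV. (v$s - vs$s)^2) \<le> Lc c \<alpha> \<tau> vs us (v,u)"
    and "\<tau> * (\<Sum>s\<in>UNIV. \<Sum>a\<in>UNIV. kl (us$s$a) (u$s$a)) \<le> Lc c \<alpha> \<tau> vs us (v,u)"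
    and "(\<Sum>s\<in>UNIV. (v$s - vs$s)^2) \<ge> 0"
    and "(\<Sum>s\<in>UNIV. \<Sum>a\<in>UNIV. kl (us$s$a) (u$s$a)) \<ge> 0"
proof -
  have u: "\<forall>s a. u$s$a > 0" using p by (simp add: posdom_def)
  show A: "(\<Sum>s\<in>UNIV. (v$s - vs$s)^2) \<ge> 0" by (intro sum_nonneg) auto
  show B: "(\<Sum>s\<in>UNIV. \<Sum>a\<in>UNIV. kl (us$s$a) (u$s$a)) \<ge> 0"
    using u us_pos by (intro sum_nonneg kl_nonneg) auto
  have C: "(\<Sum>s\<in>UNIV. kl (utilde us s) (utilde u s)) \<ge> 0"
    using u us_pos by (intro sum_nonneg kl_nonneg utilde_pos) auto
  have k: "c/(1-c) \<ge> 0" using c by simp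
  have "c/(1-c) * (\<Sum>s\<in>UNIV. kl (utilde us s) (utilde u s)) \<ge> 0" by (rule mult_nonneg_nonneg[OF k C])
  hence t3: "\<tau> * (c/(1-c) * (\<Sum>s\<in>UNIV. kl (utilde us s) (utilde u s))) \<ge> 0" by (rule mult_nonneg_nonneg[OF less_imp_le[OF tau]])
  have t1: "\<alpha>/2 * (\<Sum>s\<in>UNIV. (v$s - vs$s)^2) \<ge> 0" using A alpha by simp
  have t2: "\<tau> * (\<Sum>s\<in>UNIV. \<Sum>a\<in>UNIV. kl (us$s$a) (u$s$a)) \<ge> 0" using B tau by simp
  show "\<alpha>/2 * (\<Sum>s\<in>UNIV. (v$s - vs$s)^2) \<le> Lc c \<alpha> \<tau> vs us (v,u)"
     "\<tau> * (\<Sum>s\<in>UNIV. \<Sum>a\<in>UNIV. kl (us$s$a) (u$s$a)) \<le> Lc c \<alpha> \<tau> vs us (v,u)"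
    unfolding Lc_eq distrib_left using t1 t2 t3 by linarith+
qed

lemma Lc_pos:
  fixes vs :: "real^'s::finite" and us :: "real^'a::finite^'s"
  assumes alpha: "\<alpha> > 0" and tau: "\<tau> > 0" and c: "0 < c" "c < 1" and us_pos: "\<forall>s a. us $ s $ a > 0"
    and p: "(v,u) \<in> posdom" and ne: "(v,u) \<noteq> (vs,us)"
  shows "Lc c \<alpha> \<tau> vs us (v,u) > 0"
proof -
  note P = Lc_parts(1)[OF alpha tau c us_pos p, of vs] Lc_parts(2)[OF alpha tau c us_pos p, of vs]
  have u: "\<forall>s a. u$s$a > 0" using p by (simp add: posdom_def)
  show ?thesis
  proof (cases "v = vs")
    case False
    then obtain s where s: "v$s \<noteq> vs$s" by (auto simp: vec_eq_iff)
    have "(\<Sum>s\<in>UNIV. (v$s - vs$s)^2) > 0"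
      using s by (intro sum_pos2[where i=s]) auto
    hence "\<alpha>/2 * (\<Sum>s\<in>UNIV. (v$s - vs$s)^2) > 0" using alpha by simp
    thus ?thesis using P(1) by linarith
  next
    case True
    with ne have "u \<noteq> us" by simp
    then obtain s a where sa: "u$s$a \<noteq> us$s$a" by (auto simp: vec_eq_iff)
    have "(\<Sum>s\<in>UNIV. \<Sum>a\<in>UNIV. kl (us$s$a) (u$s$a)) > 0"
    proof (intro sum_pos2[where i=s])
      show "0 < (\<Sum>a\<in>UNIV. kl (us$s$a) (u$s$a))"
        using sa u us_pos by (intro sum_pos2[where i=a] kl_pos kl_nonneg) auto
      show "\<And>i. i \<in> UNIV \<Longrightarrow> 0 \<le> (\<Sum>a\<in>UNIV. kl (us$i$a) (u$i$a))"
        using u us_pos by (intro sum_nonneg kl_nonneg) auto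
    qed auto
    hence "\<tau> * (\<Sum>s\<in>UNIV. \<Sum>a\<in>UNIV. kl (us$s$a) (u$s$a)) > 0" using tau by simp
    thus ?thesis using P(2) by linarith
  qed
qed

lemma abs_le_sq: "\<bar>x::real\<bar> \<le> 1 + x^2"
proof -
  have "0 \<le> (\<bar>x\<bar> - 1/2)^2" by simp
  moreover have "(\<bar>x\<bar> - 1/2)^2 = x^2 - \<bar>x\<bar> + 1/4"
    by (simp add: power2_eq_square algebra_simps)
  ultimately show ?thesis by linarith
qed

lemma Lc_bounded:
  fixes vs :: "real^'s::finite" and us :: "real^'a::finite^'s"
  assumes alpha: "\<alpha> > 0" and tau: "\<tau> > 0" and c: "0 < c" "c < 1" and us_pos: "\<forall>s a. us $ s $ a > 0"
  shows "bounded {p\<in>posdom. Lc c \<alpha> \<tau> vs us p \<le> t}"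
proof -
  define R where "R = (\<Sum>s\<in>UNIV. \<bar>vs$s\<bar> + 1 + 2*t/\<alpha>) + (\<Sum>s\<in>UNIV. \<Sum>a\<in>UNIV. 2*(t/\<tau> + us$s$a * ln 2))"
  have "norm p \<le> R" if pS: "p \<in> {p\<in>posdom. Lc c \<alpha> \<tau> vs us p \<le> t}" for p
  proof -
    obtain v u where pe: "p = (v,u)" by (cases p)
    have pd: "(v,u) \<in> posdom" and Lt: "Lc c \<alpha> \<tau> vs us (v,u) \<le> t" using pS pe by auto
    note P = Lc_parts(1)[OF alpha tau c us_pos pd, of vs] Lc_parts(2)[OF alpha tau c us_pos pd, of vs]
    have u: "\<forall>s a. u$s$a > 0" using pd by (simp add: posdom_def)
    have vb: "\<bar>v$s\<bar> \<le> \<bar>vs$s\<bar> + 1 + 2*t/\<alpha>" for s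
    proof -
      have "(v$s - vs$s)^2 \<le> (\<Sum>s\<in>UNIV. (v$s - vs$s)^2)"
        by (intro member_le_sum) auto
      hence "\<alpha>/2 * (v$s - vs$s)^2 \<le> \<alpha>/2 * (\<Sum>s\<in>UNIV. (v$s - vs$s)^2)"
        using alpha by (intro mult_left_mono) auto
      hence "\<alpha>/2 * (v$s - vs$s)^2 \<le> t" using P(1) Lt by linarith
      hence "(v$s - vs$s)^2 \<le> 2*t/\<alpha>" using alpha by (simp add: field_simps)
      moreover have "\<bar>v$s - vs$s\<bar> \<le> 1 + (v$s - vs$s)^2"
        by (rule abs_le_sq)
      ultimately show ?thesis by linarith
    qed
    have ub: "\<bar>u$s$a\<bar> \<le> 2*(t/\<tau> + us$s$a * ln 2)" for s a
    proof -
      have inner: "\<forall>s. (\<Sum>a\<in>UNIV. kl (us$s$a) (u$s$a)) \<ge> 0"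
        using u us_pos by (auto intro!: sum_nonneg kl_nonneg)
      have "kl (us$s$a) (u$s$a) \<le> (\<Sum>a\<in>UNIV. kl (us$s$a) (u$s$a))"
        using u us_pos by (intro member_le_sum kl_nonneg) auto
      also have "\<dots> \<le> (\<Sum>s\<in>UNIV. \<Sum>a\<in>UNIV. kl (us$s$a) (u$s$a))"
        using inner by (intro member_le_sum) auto
      finally have "\<tau> * kl (us$s$a) (u$s$a) \<le> \<tau> * (\<Sum>s\<in>UNIV. \<Sum>a\<in>UNIV. kl (us$s$a) (u$s$a))"
        using tau by (intro mult_left_mono) auto
      hence "\<tau> * kl (us$s$a) (u$s$a) \<le> t" using P(2) Lt by linarith
      hence f1: "kl (us$s$a) (u$s$a) \<le> t/\<tau>" using tau by (simp add: field_simps)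
      have f2: "u$s$a/2 - us$s$a * ln 2 \<le> kl (us$s$a) (u$s$a)"
        using u us_pos by (intro kl_lower) auto
      have "u$s$a/2 - us$s$a * ln 2 \<le> t/\<tau>" by (rule order_trans[OF f2 f1])
      hence "u$s$a \<le> 2*(t/\<tau> + us$s$a * ln 2)" by (simp add: field_simps)
      moreover have "u$s$a > 0" using u by auto
      ultimately show ?thesis by simp
    qed
    have n1: "norm p \<le> norm v + norm u" unfolding pe by (rule norm_Pair_le)
    have n2: "norm v \<le> (\<Sum>s\<in>UNIV. \<bar>v$s\<bar>)" by (rule norm_le_l1_cart)
    have n3: "norm u \<le> (\<Sum>s\<in>UNIV. norm (u$s))" unfolding norm_vec_def[of u]
      by (rule L2_set_le_sum) simp
    have n4: "(\<Sum>s\<in>UNIV. norm (u$s)) \<le> (\<Sum>s\<in>UNIV. \<Sum>a\<in>UNIV. \<bar>u$s$a\<bar>)"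
      by (intro sum_mono) (simp add: norm_le_l1_cart)
    have "norm p \<le> (\<Sum>s\<in>UNIV. \<bar>v$s\<bar>) + (\<Sum>s\<in>UNIV. \<Sum>a\<in>UNIV. \<bar>u$s$a\<bar>)"
      using n1 n2 n3 n4 by linarith
    also have "\<dots> \<le> R" unfolding R_def
      by (intro add_mono sum_mono; rule vb ub)
    finally show ?thesis .
  qed
  thus ?thesis unfolding bounded_iff by blast
qed


theorem lemma3p1:
  fixes P :: "'a::finite \<Rightarrow> 's::finite \<Rightarrow> 's \<Rightarrow> real"
    and r :: "'s \<Rightarrow> 'a \<Rightarrow> real"
    and \<gamma> \<tau> \<alpha> c :: real
    and vs :: "real^'s" and us :: "real^'a^'s"
  assumes P_nonneg: "\<forall>a s s'. P a s s' \<ge> 0"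
    and P_sum: "\<forall>a s. (\<Sum>s'\<in>UNIV. P a s s') = 1"
    and r_nonneg: "\<forall>s a. r s a \<ge> 0"
    and gamma: "0 < \<gamma>" "\<gamma> < 1"
    and tau: "\<tau> > 0"
    and alpha: "\<alpha> > 0"
    and c: "0 < c" "c < 1"
    and saddle: "is_saddle \<alpha> \<gamma> \<tau> P r vs us"
    and unique: "\<forall>v u. is_saddle \<alpha> \<gamma> \<tau> P r v u \<longrightarrow> v = vs \<and> u = us"
    and us_pos: "\<forall>s a. us $ s $ a > 0"
  shows "convex_on posdom (Lc c \<alpha> \<tau> vs us)
       \<and> (vs, us) \<in> posdom
       \<and> Lc c \<alpha> \<tau> vs us (vs, us) = 0
       \<and> (\<forall>p\<in>posdom. p \<noteq> (vs, us) \<longrightarrow> Lc c \<alpha> \<tau> vs us (vs, us) < Lc c \<alpha> \<tau> vs us p)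
       \<and> (\<forall>t. bounded {p\<in>posdom. Lc c \<alpha> \<tau> vs us p \<le> t})"
proof -
  have pd: "(vs,us) \<in> posdom" using us_pos by (simp add: posdom_def)
  have ut: "\<And>s. utilde us s > 0" using utilde_pos[OF us_pos] by blast
  have z: "Lc c \<alpha> \<tau> vs us (vs,us) = 0"
    unfolding Lc_eq using us_pos ut by (simp add: kl_zero)
  have strict: "\<forall>p\<in>posdom. p \<noteq> (vs, us) \<longrightarrow> Lc c \<alpha> \<tau> vs us (vs, us) < Lc c \<alpha> \<tau> vs us p"
  proof (intro ballI impI)
    fix p :: "(real^'s) \<times> (real^'a^'s)"
    assume p: "p \<in> posdom" "p \<noteq> (vs,us)"
    obtain v u where pe: "p = (v,u)" by (cases p)
    show "Lc c \<alpha> \<tau> vs us (vs, us) < Lc c \<alpha> \<tau> vs us p"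
      using Lc_pos[OF alpha tau c us_pos, of v u vs] p pe z by simp
  qed
  show ?thesis
    using Lc_convex[OF alpha tau c us_pos, of vs] pd z strict
      Lc_bounded[OF alpha tau c us_pos, of vs] by blast
qed

end
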